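(* Consider proportional reinsurance with $I=1$, $m(t,y,u)=p-q+qu$, $\sigma(t,y,u)=\sigma_0u$, $p<q$, $\sigma_0>0$, and the exponential utility $U(x)=-e^{-\beta x}$ with $\beta>0$. Under the ansatz $V(t,x,y)=U(x)\tilde V(t,y)$, the optimal strategy is $(u^*(t,y),a^*(t,y))$ with $$u^*(t,y)=\begin{cases}0,&(t,y)\in A_0,\\ \dfrac{(\sigma_1(t,y)^2+\sigma_2(t,y)^2)q-\mu(t,y)\sigma_0\sigma_1(t,y)}{\sigma_0^2\sigma_2(t,y)^2\beta},&(t,y)\in(A_0\cup A_1)^c,\\ 1,&(t,y)\in A_1,\end{cases}$$ where $A_0=\{(t,y)\in[0,T]\times\mathbb R: q<\frac{\mu(t,y)\sigma_1(t,y)\sigma_0}{\sigma_1(t,y)^2+\sigma_2(t,y)^2}\}$, $A_1=\{(t,y)\in[0,T]\times\mathbb R: q>\frac{\sigma_0[\sigma_2(t,y)^2\sigma_0\beta+\mu(t,y)\sigma_1(t,y)]}{\sigma_1(t,y)^2+\sigma_2(t,y)^2}\}$, and $$a^*(t,y)=\frac{\mu(t,y)-\beta\sigma_0u^*(t,y)\sigma_1(t,y)}{\beta(\sigma_1(t,y)^2+\sigma_2(t,y)^2)}.$$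
   Context: Independent Brownian motions $W^1,W^2,W^Y$; environmental process $dY_t=\mu_Y(t,Y_t)dt+\sigma_Y(t,Y_t)dW^Y_t$ with bounded Lipschitz $C^1$ coefficients; $\mu,\sigma_1,\sigma_2$ bounded continuous positive Lipschitz functions of $(t,y)$ with $\sigma_1+\sigma_2$ bounded away from zero. With retention $u_t\in[0,1]$ and amount $a_t$ invested in the risky asset, the surplus is $dX_t=\{m(t,Y_t,u_t)+a_t\mu(t,Y_t)\}dt+\{\sigma(t,Y_t,u_t)+a_t\sigma_1(t,Y_t)\}dW^1_t+a_t\sigma_2(t,Y_t)dW^2_t$, and the insurer maximises $\mathbb E[U(X_T)]$ over adapted strategies with $\mathbb E\int_0^Ta_t^2dt<\infty$; $V(t,x,y)$ denotes the value function with HJB equation $0=V_t+\sup_{u,a}[\{m+a\mu\}V_x+\frac12\{(\sigma+a\sigma_1)^2+a^2\sigma_2^2\}V_{xx}]+\mu_YV_y+\frac12\sigma_Y^2V_{yy}$. The optimal strategy here means the maximiser in this HJB equation under the ansatz $V(t,x,y)=U(x)\tilde V(t,y)$ for some function $\tilde V$. *)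

theory Defs
  imports "HOL-Analysis.Analysis"
begin

definition expU :: "real \<Rightarrow> real \<Rightarrow> real" where
  "expU beta x = - exp (- beta * x)"

definition lipschitz2 :: "(real \<Rightarrow> real \<Rightarrow> real) \<Rightarrow> bool" where
  "lipschitz2 f \<longleftrightarrow> (\<exists>L. \<forall>t y t' y'. \<bar>f t y - f t' y'\<bar> \<le> L * (\<bar>t - t'\<bar> + \<bar>y - y'\<bar>))"

definition bounded2 :: "(real \<Rightarrow> real \<Rightarrow> real) \<Rightarrow> bool" where
  "bounded2 f \<longleftrightarrow> (\<exists>B. \<forall>t y. \<bar>f t y\<bar> \<le> B)"

definition hjb_ham ::
  "(real \<Rightarrow> real \<Rightarrow> real) \<Rightarrow> (real \<Rightarrow> real \<Rightarrow> real) \<Rightarrow> (real \<Rightarrow> real \<Rightarrow> real)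
   \<Rightarrow> (real \<Rightarrow> real \<Rightarrow> real \<Rightarrow> real) \<Rightarrow> (real \<Rightarrow> real \<Rightarrow> real \<Rightarrow> real)
   \<Rightarrow> real \<Rightarrow> real \<Rightarrow> real \<Rightarrow> real \<Rightarrow> real \<Rightarrow> real \<Rightarrow> real" where
  "hjb_ham mu sig1 sig2 m sig t y Vx Vxx u a =
     (m t y u + a * mu t y) * Vx
     + 1/2 * ((sig t y u + a * sig1 t y)^2 + a^2 * (sig2 t y)^2) * Vxx"

definition A0 :: "real \<Rightarrow> (real \<Rightarrow> real \<Rightarrow> real) \<Rightarrow> (real \<Rightarrow> real \<Rightarrow> real) \<Rightarrow> (real \<Rightarrow> real \<Rightarrow> real)
   \<Rightarrow> real \<Rightarrow> real \<Rightarrow> (real \<times> real) set" where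
  "A0 T mu sig1 sig2 sig0 q =
     {(t, y). t \<in> {0..T} \<and>
        q < mu t y * sig1 t y * sig0 / ((sig1 t y)^2 + (sig2 t y)^2)}"

definition A1 :: "real \<Rightarrow> (real \<Rightarrow> real \<Rightarrow> real) \<Rightarrow> (real \<Rightarrow> real \<Rightarrow> real) \<Rightarrow> (real \<Rightarrow> real \<Rightarrow> real)
   \<Rightarrow> real \<Rightarrow> real \<Rightarrow> real \<Rightarrow> (real \<times> real) set" where
  "A1 T mu sig1 sig2 sig0 beta q =
     {(t, y). t \<in> {0..T} \<and>
        q > sig0 * ((sig2 t y)^2 * sig0 * beta + mu t y * sig1 t y) / ((sig1 t y)^2 + (sig2 t y)^2)}"

definition ustar :: "real \<Rightarrow> (real \<Rightarrow> real \<Rightarrow> real) \<Rightarrow> (real \<Rightarrow> real \<Rightarrow> real) \<Rightarrow> (real \<Rightarrow> real \<Rightarrow> real)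
   \<Rightarrow> real \<Rightarrow> real \<Rightarrow> real \<Rightarrow> real \<Rightarrow> real \<Rightarrow> real" where
  "ustar T mu sig1 sig2 sig0 beta q t y =
     (if (t, y) \<in> A0 T mu sig1 sig2 sig0 q then 0
      else if (t, y) \<in> A1 T mu sig1 sig2 sig0 beta q then 1
      else (((sig1 t y)^2 + (sig2 t y)^2) * q - mu t y * sig0 * sig1 t y)
           / (sig0^2 * (sig2 t y)^2 * beta))"

definition astar :: "real \<Rightarrow> (real \<Rightarrow> real \<Rightarrow> real) \<Rightarrow> (real \<Rightarrow> real \<Rightarrow> real) \<Rightarrow> (real \<Rightarrow> real \<Rightarrow> real)
   \<Rightarrow> real \<Rightarrow> real \<Rightarrow> real \<Rightarrow> real \<Rightarrow> real \<Rightarrow> real" where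
  "astar T mu sig1 sig2 sig0 beta q t y =
     (mu t y - beta * sig0 * ustar T mu sig1 sig2 sig0 beta q t y * sig1 t y)
     / (beta * ((sig1 t y)^2 + (sig2 t y)^2))"

end

theory Submission
  imports Defs
begin

lemma quad_ident:
  fixes p q k0 w1 w2 m b us as u a :: real
  shows "((p - q + q*u + a*m) - b/2*((k0*u + a*w1)^2 + a^2*w2^2))
       - ((p - q + q*us + as*m) - b/2*((k0*us + as*w1)^2 + as^2*w2^2))
       = (q - b*k0*(k0*us + as*w1))*(u-us) + (m - b*(k0*us+as*w1)*w1 - b*as*w2^2)*(a-as)
         - b/2*((k0*(u-us) + w1*(a-as))^2 + w2^2*(a-as)^2)"
  by (simp add: algebra_simps power2_eq_square)

lemma key:
  fixes p q k0 w1 w2 m b us as u a :: real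
  assumes b: "b > 0" and w2: "w2 > 0"
    and ga: "m - b*(k0*us+as*w1)*w1 - b*as*w2^2 = 0"
    and gu: "(q - b*k0*(k0*us + as*w1))*(u-us) \<le> 0"
    and k0: "k0 > 0"
    and ne: "(u, a) \<noteq> (us, as)"
  shows "(p - q + q*u + a*m) - b/2*((k0*u + a*w1)^2 + a^2*w2^2)
       < (p - q + q*us + as*m) - b/2*((k0*us + as*w1)^2 + as^2*w2^2)"
proof -
  have Q: "(k0*(u-us) + w1*(a-as))^2 + w2^2*(a-as)^2 > 0"
  proof (cases "a = as")
    case True
    then have "u \<noteq> us" using ne by auto
    then have "k0*(u-us) \<noteq> 0" using k0 by auto
    then have "(k0*(u-us))^2 > 0" by simp
    then show ?thesis using True by simp
  next
    case False
    then have "w2^2*(a-as)^2 > 0" using w2 by simp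
    then show ?thesis by (smt (verit) zero_le_power2)
  qed
  have "b/2*((k0*(u-us) + w1*(a-as))^2 + w2^2*(a-as)^2) > 0" using Q b by simp
  moreover have "(m - b*(k0*us+as*w1)*w1 - b*as*w2^2)*(a-as) = 0" using ga by simp
  ultimately show ?thesis using quad_ident[of p q u a m b k0 w1 w2 us as] gu by linarith
qed

theorem corollary5p3:
  fixes T p q sig0 beta :: real
    and mu sig1 sig2 :: "real \<Rightarrow> real \<Rightarrow> real"
    and Vt :: "real \<Rightarrow> real \<Rightarrow> real"
  assumes T_pos: "T > 0"
    and pq: "p < q" and sig0_pos: "sig0 > 0" and beta_pos: "beta > 0"
    and mu_pos: "\<And>t y. mu t y > 0"
    and sig1_pos: "\<And>t y. sig1 t y > 0"
    and sig2_pos: "\<And>t y. sig2 t y > 0"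
    and coef_bdd: "bounded2 mu" "bounded2 sig1" "bounded2 sig2"
    and coef_cont: "continuous_on UNIV (\<lambda>(t, y). mu t y)"
                   "continuous_on UNIV (\<lambda>(t, y). sig1 t y)"
                   "continuous_on UNIV (\<lambda>(t, y). sig2 t y)"
    and coef_lip: "lipschitz2 mu" "lipschitz2 sig1" "lipschitz2 sig2"
    and nondeg: "\<exists>c>0. \<forall>t y. sig1 t y + sig2 t y \<ge> c"
    and Vt_pos: "\<And>t y. Vt t y > 0"
  shows "\<forall>t\<in>{0..T}. \<forall>y x.
     (let V = (\<lambda>\<xi>. expU beta \<xi> * Vt t y);
          Vx = deriv V x; Vxx = deriv (deriv V) x;
          H = hjb_ham mu sig1 sig2 (\<lambda>t y u. p - q + q * u) (\<lambda>t y u. sig0 * u) t y Vx Vxx;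
          us = ustar T mu sig1 sig2 sig0 beta q t y;
          as = astar T mu sig1 sig2 sig0 beta q t y
      in us \<in> {0..1} \<and>
         (\<forall>u\<in>{0..1}. \<forall>a. (u, a) \<noteq> (us, as) \<longrightarrow> H u a < H us as))"
proof (intro ballI allI)
  fix t y x assume t: "t \<in> {0..T}"
  define K where "K = Vt t y"
  have K: "K > 0" using Vt_pos K_def by simp
  define m where "m = mu t y"
  define w1 where "w1 = sig1 t y"
  define w2 where "w2 = sig2 t y"
  have m: "m > 0" and w1: "w1 > 0" and w2: "w2 > 0"
    using mu_pos sig1_pos sig2_pos m_def w1_def w2_def by auto
  define S where "S = w1^2 + w2^2"
  have S: "S > 0" using w1 w2 S_def by (simp add: add_pos_pos)
  have d1: "\<And>z. ((\<lambda>\<xi>. expU beta \<xi> * K) has_real_derivative (beta * exp (- beta * z) * K)) (at z)"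
    unfolding expU_def by (auto intro!: derivative_eq_intros)
  have D1: "deriv (\<lambda>\<xi>. expU beta \<xi> * K) = (\<lambda>z. beta * exp (- beta * z) * K)"
    using d1 DERIV_imp_deriv by blast
  have d2: "((\<lambda>z. beta * exp (- beta * z) * K) has_real_derivative (- beta * (beta * exp (- beta * x) * K))) (at x)"
    by (auto intro!: derivative_eq_intros)
  have D2: "deriv (deriv (\<lambda>\<xi>. expU beta \<xi> * K)) x = - beta * (beta * exp (- beta * x) * K)"
    unfolding D1 using d2 DERIV_imp_deriv by blast
  define c where "c = beta * exp (- beta * x) * K"
  have c: "c > 0" using c_def beta_pos K by simp
  define h where "h = (\<lambda>u a. (p - q + q*u + a*m) - beta/2*((sig0*u + a*w1)^2 + a^2*w2^2))"
  have Heq: "hjb_ham mu sig1 sig2 (\<lambda>t y u. p - q + q * u) (\<lambda>t y u. sig0 * u) t y c (- beta * c) u a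
      = c * h u a" for u a
    unfolding hjb_ham_def h_def m_def w1_def w2_def by (simp add: algebra_simps)
  define us where "us = ustar T mu sig1 sig2 sig0 beta q t y"
  define as where "as = astar T mu sig1 sig2 sig0 beta q t y"
  have as_eq: "as = (m - beta * sig0*us*w1) / (beta * S)"
    unfolding as_def astar_def us_def m_def w1_def S_def w2_def by simp
  have ga: "m - beta*(sig0*us+as*w1)*w1 - beta*as*w2^2 = 0"
  proof -
    have "as * (beta * S) = m - beta * sig0*us*w1" using as_eq S beta_pos by simp
    then show ?thesis unfolding S_def by (simp add: algebra_simps power2_eq_square)
  qed
  have gu_eq: "q - beta * sig0*(sig0*us + as*w1) = (q*S - sig0*w1*m - beta * sig0^2*w2^2*us) / S"
  proof -
    have "as * (beta * S) = m - beta * sig0*us*w1" using as_eq S beta_pos by simp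
    then have "sig0*w1*(as * (beta * S)) = sig0*w1*(m - beta * sig0*us*w1)" by simp
    then have "(q - beta * sig0*(sig0*us + as*w1)) * S = q*S - sig0*w1*m - beta * sig0^2*w2^2*us"
      unfolding S_def by (simp add: algebra_simps power2_eq_square)
    then show ?thesis using S by (simp add: field_simps)
  qed
  have A0iff: "(t, y) \<in> A0 T mu sig1 sig2 sig0 q \<longleftrightarrow> q*S < m*w1 * sig0"
    using t S unfolding A0_def S_def m_def w1_def w2_def by (simp add: pos_less_divide_eq)
  have A1iff: "(t, y) \<in> A1 T mu sig1 sig2 sig0 beta q \<longleftrightarrow> q*S > sig0*(w2^2 * sig0*beta + m*w1)"
    using t S unfolding A1_def S_def m_def w1_def w2_def by (simp add: pos_divide_less_eq)
  have pos2: "sig0^2 * w2^2 * beta > 0" using sig0_pos w2 beta_pos by simp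
  have main: "us \<in> {0..1} \<and> (\<forall>u\<in>{0..1}. (q - beta * sig0*(sig0*us + as*w1))*(u-us) \<le> 0)"
  proof (cases "q*S < m*w1 * sig0")
    case True
    then have "us = 0" unfolding us_def ustar_def using A0iff by simp
    moreover have "q*S - sig0*w1*m - beta * sig0^2*w2^2*us < 0" using True \<open>us = 0\<close> by (simp add: algebra_simps)
    then have "q - beta * sig0*(sig0*us + as*w1) < 0" using gu_eq S by (simp add: divide_neg_pos)
    then show ?thesis using \<open>us = 0\<close> by (auto intro!: mult_nonpos_nonneg)
  next
    case nA0: False
    show ?thesis
    proof (cases "q*S > sig0*(w2^2 * sig0*beta + m*w1)")
      case True
      then have "us = 1" unfolding us_def ustar_def using A0iff A1iff nA0 by simp
      moreover have "q*S - sig0*w1*m - beta * sig0^2*w2^2*us > 0" using True \<open>us = 1\<close>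
        by (simp add: algebra_simps power2_eq_square)
      then have "q - beta * sig0*(sig0*us + as*w1) > 0" using gu_eq S by simp
      then show ?thesis using \<open>us = 1\<close> by (auto intro!: mult_nonneg_nonpos)
    next
      case False
      then have ueq: "us = (S*q - m * sig0*w1) / (sig0^2*w2^2*beta)"
        unfolding us_def ustar_def using A0iff A1iff nA0 unfolding S_def m_def w1_def w2_def by simp
      have "us \<ge> 0" unfolding ueq using nA0 pos2 by (simp add: algebra_simps)
      moreover have "us \<le> 1" unfolding ueq using False pos2
        by (simp add: pos_divide_le_eq algebra_simps power2_eq_square)
      moreover have "q*S - sig0*w1*m - beta * sig0^2*w2^2*us = 0"
      proof -
        have "(sig0^2*w2^2*beta) * us = S*q - m * sig0*w1" unfolding ueq using pos2 by (metis less_irrefl nonzero_mult_div_cancel_left times_divide_eq_right)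
        then show ?thesis by (simp add: algebra_simps)
      qed
      ultimately show ?thesis using gu_eq by simp
    qed
  qed
  show "let V = (\<lambda>\<xi>. expU beta \<xi> * Vt t y);
          Vx = deriv V x; Vxx = deriv (deriv V) x;
          H = hjb_ham mu sig1 sig2 (\<lambda>t y u. p - q + q * u) (\<lambda>t y u. sig0 * u) t y Vx Vxx;
          us = ustar T mu sig1 sig2 sig0 beta q t y;
          as = astar T mu sig1 sig2 sig0 beta q t y
      in us \<in> {0..1} \<and>
         (\<forall>u\<in>{0..1}. \<forall>a. (u, a) \<noteq> (us, as) \<longrightarrow> H u a < H us as)"
    unfolding Let_def K_def[symmetric] us_def[symmetric] as_def[symmetric]
  proof (intro conjI ballI allI impI)
    show "us \<in> {0..1}" using main by blast
  next
    fix u a assume u: "u \<in> {0..1}" and ne: "(u, a) \<noteq> (us, as)"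
    have Vx: "deriv (\<lambda>\<xi>. expU beta \<xi> * K) x = c" unfolding D1 c_def by simp
    have Vxx: "deriv (deriv (\<lambda>\<xi>. expU beta \<xi> * K)) x = - beta * c" unfolding D2 c_def by simp
    have "h u a < h us as" unfolding h_def
      using key[OF beta_pos w2 ga _ sig0_pos ne, of q p] main u by blast
    then show "hjb_ham mu sig1 sig2 (\<lambda>t y u. p - q + q * u) (\<lambda>t y u. sig0 * u) t y
          (deriv (\<lambda>\<xi>. expU beta \<xi> * K) x) (deriv (deriv (\<lambda>\<xi>. expU beta \<xi> * K)) x) u a
        < hjb_ham mu sig1 sig2 (\<lambda>t y u. p - q + q * u) (\<lambda>t y u. sig0 * u) t y
          (deriv (\<lambda>\<xi>. expU beta \<xi> * K) x) (deriv (deriv (\<lambda>\<xi>. expU beta \<xi> * K)) x) us as"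
      unfolding Vx Vxx Heq using c by simp
  qed
qed

end
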